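(* Consider AdaHedge for $K$-armed bandits relying on a known upper bound $M$ on the payoffs (described in the context). For all $m\in\mathbb{R}$ with $m\le M$, all oblivious sequences $y_1,y_2,\dots$ in $[m,M]^K$ and all $T\ge1$, \[ R_T(y_{1:T})\le 2(M-m)\sqrt{KT\ln K}+2(M-m). \]
   Context: Oblivious adversarial $K$-armed bandits ($K\ge2$): reward vectors $y_t\in[m,M]^K$ fixed beforehand; at round $t$ the player draws $A_t\sim p_t$ and observes only $y_{t,A_t}$; $R_T(y_{1:T})=\max_a\sum_{t=1}^Ty_{t,a}-\mathbb{E}[\sum_{t=1}^Ty_{t,A_t}]$. The player knows $M$ but not $m$. Algorithm (input $M$): $\eta_1=+\infty$, $p_1=(1/K,\dots,1/K)$. For $t\ge1$: draw $A_t\sim p_t$; observe $y_{t,A_t}$; set $\widehat y_{t,a}=\frac{y_{t,a}-M}{p_{t,a}}\mathbf{1}\{A_t=a\}+M$ for all $a$; compute $\delta_t=-\sum_a p_{t,a}\widehat y_{t,a}+\frac1{\eta_t}\ln(\sum_a p_{t,a}e^{\eta_t\widehat y_{t,a}})$ if $\eta_t<\infty$ and $\delta_t=-\sum_a p_{t,a}\widehat y_{t,a}+\max_a\widehat y_{t,a}$ if $\eta_t=\infty$; set $\eta_{t+1}=\ln K/\sum_{s=1}^t\delta_s$; set $p_{t+1,a}=\exp(\eta_{t+1}\sum_{s=1}^t\widehat y_{s,a})/\sum_{k=1}^K\exp(\eta_{t+1}\sum_{s=1}^t\widehat y_{s,k})$. No mixing with the uniform distribution is used. *)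

theory Defs
  imports Complex_Main "HOL-Library.FuncSet"
begin

text \<open>Arms are 0..K-1, rounds are 0-based (round t of the code = round t+1 of the paper).
  A reward sequence is y :: nat => nat => real, y t a.  An action history is A :: nat => nat,
  with A s the arm played at round s.  The internal state of AdaHedge before round t is the
  pair (L, D): L a = sum of the estimates yhat_{s,a} for s < t, and D = sum of delta_s for s < t.
  The learning rate is eta = ln K / D, with eta = +infinity iff D = 0 (convention ln K / 0 = infinity).\<close>

definition ah_eta :: "nat \<Rightarrow> real \<Rightarrow> real" where
  "ah_eta K D = ln (real K) / D"

text \<open>Weights p for the current state.  For eta = +infinity (D = 0) we use the limit of the
  exponential weights, i.e. uniform on the maximisers of L (this is uniform at t = 1, since L = 0).\<close>
definition ah_prob :: "nat \<Rightarrow> (nat \<Rightarrow> real) \<Rightarrow> real \<Rightarrow> nat \<Rightarrow> real" where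
  "ah_prob K L D a =
     (if D = 0 then
        (let S = {k\<in>{..<K}. L k = Max (L ` {..<K})} in if a \<in> S then 1 / real (card S) else 0)
      else exp (ah_eta K D * L a) / (\<Sum>k<K. exp (ah_eta K D * L k)))"

definition ah_delta :: "nat \<Rightarrow> real \<Rightarrow> (nat \<Rightarrow> real) \<Rightarrow> (nat \<Rightarrow> real) \<Rightarrow> real" where
  "ah_delta K D p yh =
     (if D = 0 then - (\<Sum>a<K. p a * yh a) + Max (yh ` {..<K})
      else - (\<Sum>a<K. p a * yh a)
           + (1 / ah_eta K D) * ln (\<Sum>a<K. p a * exp (ah_eta K D * yh a)))"

primrec ah_state :: "nat \<Rightarrow> real \<Rightarrow> (nat \<Rightarrow> nat \<Rightarrow> real) \<Rightarrow> (nat \<Rightarrow> nat) \<Rightarrow> nat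
                      \<Rightarrow> (nat \<Rightarrow> real) \<times> real" where
  "ah_state K M y A 0 = ((\<lambda>a. 0), 0)"
| "ah_state K M y A (Suc t) =
     (let LD = ah_state K M y A t; L = fst LD; D = snd LD;
          p = ah_prob K L D;
          yh = (\<lambda>a. if a = A t then (y t a - M) / p a + M else M)
      in ((\<lambda>a. L a + yh a), D + ah_delta K D p yh))"

definition ah_p :: "nat \<Rightarrow> real \<Rightarrow> (nat \<Rightarrow> nat \<Rightarrow> real) \<Rightarrow> (nat \<Rightarrow> nat) \<Rightarrow> nat \<Rightarrow> nat \<Rightarrow> real" where
  "ah_p K M y A t = ah_prob K (fst (ah_state K M y A t)) (snd (ah_state K M y A t))"

definition ah_expected_gain :: "nat \<Rightarrow> real \<Rightarrow> (nat \<Rightarrow> nat \<Rightarrow> real) \<Rightarrow> nat \<Rightarrow> real" where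
  "ah_expected_gain K M y T =
     (\<Sum>A \<in> PiE {..<T} (\<lambda>_. {..<K}).
        (\<Prod>t<T. ah_p K M y A t (A t)) * (\<Sum>t<T. y t (A t)))"

definition ah_regret :: "nat \<Rightarrow> real \<Rightarrow> (nat \<Rightarrow> nat \<Rightarrow> real) \<Rightarrow> nat \<Rightarrow> real" where
  "ah_regret K M y T = Max ((\<lambda>a. \<Sum>t<T. y t a) ` {..<K}) - ah_expected_gain K M y T"

end

theory Submission
  imports Defs
begin


lemma exp_quad_bound:
  fixes x :: real assumes "x \<le> 0"
  shows "exp x \<le> 1 + x + x^2/2"
proof -
  let ?f = "\<lambda>x::real. 1 + x + x^2/2 - exp x"
  have "?f 0 \<le> ?f x"
  proof (rule DERIV_nonpos_imp_nonincreasing[of x 0 ?f])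
    show "x \<le> 0" by fact
    fix z :: real assume "x \<le> z" "z \<le> 0"
    show "\<exists>d. DERIV ?f z :> d \<and> d \<le> 0"
      by (rule exI[of _ "1 + z - exp z"]) (auto intro!: derivative_eq_intros simp: exp_ge_add_one_self)
  qed
  then show ?thesis by simp
qed

lemma exp_tangent: "exp w * (1 + u - w) \<le> exp (u::real)"
proof -
  have "1 + (u - w) \<le> exp (u - w)" by (rule exp_ge_add_one_self)
  hence "exp w * (1 + (u - w)) \<le> exp w * exp (u - w)" by simp
  thus ?thesis by (simp add: exp_diff add_diff_eq)
qed

lemma jensen_exp:
  fixes p x :: "'a \<Rightarrow> real"
  assumes "finite S" "\<And>a. a \<in> S \<Longrightarrow> p a \<ge> 0" "(\<Sum>a\<in>S. p a) = 1"
  shows "exp (\<Sum>a\<in>S. p a * x a) \<le> (\<Sum>a\<in>S. p a * exp (x a))"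
proof -
  define mu where "mu = (\<Sum>a\<in>S. p a * x a)"
  have "(\<Sum>a\<in>S. p a * (exp mu * (1 + x a - mu))) \<le> (\<Sum>a\<in>S. p a * exp (x a))"
    by (rule sum_mono) (simp add: assms(2) exp_tangent mult_left_mono)
  moreover have "(\<Sum>a\<in>S. p a * (exp mu * (1 + x a - mu))) = exp mu * ((\<Sum>a\<in>S. p a) + (\<Sum>a\<in>S. p a * x a) - mu * (\<Sum>a\<in>S. p a))"
    by (simp add: sum_distrib_left sum_subtractf sum.distrib algebra_simps)
  ultimately show ?thesis using assms(3) by (simp add: mu_def)
qed

lemma exp_mix: 
  fixes r u v :: real assumes "0 \<le> r" "r \<le> 1"
  shows "exp (r * u + (1 - r) * v) \<le> r * exp u + (1 - r) * exp v"
proof -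
  define w where "w = r * u + (1 - r) * v"
  have "r * (exp w * (1 + u - w)) + (1 - r) * (exp w * (1 + v - w)) \<le> r * exp u + (1 - r) * exp v"
    using assms by (intro add_mono mult_left_mono exp_tangent) auto
  moreover have "r * (exp w * (1 + u - w)) + (1 - r) * (exp w * (1 + v - w)) = exp w"
    by (simp add: w_def algebra_simps)
  ultimately show ?thesis by (simp add: w_def)
qed




locale bandit =
  fixes K :: nat and M m :: real and y :: "nat \<Rightarrow> nat \<Rightarrow> real"
  assumes K2: "K \<ge> 2" and mM: "m \<le> M" and yb: "\<And>t a. a < K \<Longrightarrow> m \<le> y t a \<and> y t a \<le> M"
begin

lemma K1: "K \<ge> 1" using K2 by simp
lemma Kpos: "real K > 0" using K2 by simp
lemma lnK_pos: "ln (real K) > 0" using K2 by simp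
lemma nonempty: "{..<K} \<noteq> {}"
proof -
  have "0 \<in> {..<K}" using K2 by simp
  thus ?thesis by blast
qed

lemma eta_pos: "D > 0 \<Longrightarrow> ah_eta K D > 0"
  using lnK_pos by (simp add: ah_eta_def)

lemma prob_nonneg: "0 \<le> ah_prob K L D a"
  unfolding ah_prob_def Let_def by (auto intro!: divide_nonneg_nonneg sum_nonneg)

lemma prob_pos: "D \<noteq> 0 \<Longrightarrow> 0 < ah_prob K L D a"
proof -
  assume D: "D \<noteq> 0"
  have "(\<Sum>k<K. exp (ah_eta K D * L k)) > 0" using nonempty by (intro sum_pos) auto
  then show ?thesis using D unfolding ah_prob_def by simp
qed

lemma prob_sum: "(\<Sum>a<K. ah_prob K L D a) = 1"
proof (cases "D = 0")
  case True
  define S where "S = {k\<in>{..<K}. L k = Max (L ` {..<K})}"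
  have "Max (L ` {..<K}) \<in> L ` {..<K}" using nonempty by (intro Max_in) auto
  then have Sne: "S \<noteq> {}" unfolding S_def by auto
  have fS: "finite S" unfolding S_def by auto
  have "ah_prob K L D a = (if a \<in> S then 1 / real (card S) else 0)" for a
    using True unfolding ah_prob_def S_def Let_def by simp
  then have "(\<Sum>a<K. ah_prob K L D a) = (\<Sum>a<K. if a \<in> S then 1 / real (card S) else 0)"
    by simp
  also have "\<dots> = (\<Sum>a\<in>{x\<in>{..<K}. x \<in> S}. 1 / real (card S))"
    by (subst sum.inter_filter) auto
  also have "{x\<in>{..<K}. x \<in> S} = S" unfolding S_def by auto
  finally show ?thesis using Sne fS by simp
next
  case False
  have pos: "(\<Sum>k<K. exp (ah_eta K D * L k)) > 0" using nonempty by (intro sum_pos) auto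
  have "(\<Sum>a<K. ah_prob K L D a) = (\<Sum>a<K. exp (ah_eta K D * L a)) / (\<Sum>k<K. exp (ah_eta K D * L k))"
    using False by (simp add: ah_prob_def flip: sum_divide_distrib)
  then show ?thesis using pos by simp
qed

definition distr :: "(nat \<Rightarrow> real) \<Rightarrow> bool" where
  "distr p \<longleftrightarrow> (\<forall>a<K. 0 \<le> p a) \<and> (\<Sum>a<K. p a) = 1"

lemma distr_prob: "distr (ah_prob K L D)"
  using prob_nonneg prob_sum by (simp add: distr_def)

lemma mean_le_max:
  assumes "distr p" shows "(\<Sum>a<K. p a * f a) \<le> Max (f ` {..<K})"
proof -
  have "(\<Sum>a<K. p a * f a) \<le> (\<Sum>a<K. p a * Max (f ` {..<K}))"
    using assms by (intro sum_mono mult_left_mono) (auto simp: distr_def)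
  also have "\<dots> = Max (f ` {..<K})" using assms by (simp add: distr_def flip: sum_distrib_right)
  finally show ?thesis .
qed

lemma mean_exp_pos:
  assumes "distr p" shows "(\<Sum>a<K. p a * exp (f a)) > 0"
proof -
  have "exp (\<Sum>a<K. p a * f a) \<le> (\<Sum>a<K. p a * exp (f a))"
    using assms by (intro jensen_exp) (auto simp: distr_def)
  moreover have "exp (\<Sum>a<K. p a * f a) > 0" by simp
  ultimately show ?thesis by linarith
qed

lemma delta_nonneg:
  assumes "D \<ge> 0" "distr p" shows "0 \<le> ah_delta K D p yh"
proof (cases "D = 0")
  case True
  then show ?thesis using mean_le_max[OF assms(2), of yh] by (simp add: ah_delta_def)
next
  case False
  define e where "e = ah_eta K D"
  have e: "e > 0" using False assms eta_pos by (simp add: e_def)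
  have "exp (\<Sum>a<K. p a * (e * yh a)) \<le> (\<Sum>a<K. p a * exp (e * yh a))"
    using assms by (intro jensen_exp) (auto simp: distr_def)
  moreover have "(\<Sum>a<K. p a * (e * yh a)) = e * (\<Sum>a<K. p a * yh a)"
    by (simp add: sum_distrib_left algebra_simps)
  ultimately have "e * (\<Sum>a<K. p a * yh a) \<le> ln (\<Sum>a<K. p a * exp (e * yh a))"
    using mean_exp_pos[OF assms(2)] by (metis exp_le_cancel_iff exp_ln)
  then have "(\<Sum>a<K. p a * yh a) \<le> 1 / e * ln (\<Sum>a<K. p a * exp (e * yh a))"
    using e by (simp add: field_simps)
  then show ?thesis using False by (simp add: ah_delta_def e_def)
qed

lemma delta_upper:
  assumes "D \<ge> 0" "distr p" "\<And>a. a < K \<Longrightarrow> yh a \<le> M"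
  shows "ah_delta K D p yh \<le> M - (\<Sum>a<K. p a * yh a)"
proof (cases "D = 0")
  case True
  have "Max (yh ` {..<K}) \<le> M" using assms(3) nonempty by (subst Max_le_iff) auto
  then show ?thesis using True by (simp add: ah_delta_def)
next
  case False
  define e where "e = ah_eta K D"
  have e: "e > 0" using False assms eta_pos by (simp add: e_def)
  have "(\<Sum>a<K. p a * exp (e * yh a)) \<le> (\<Sum>a<K. p a * exp (e * M))"
    using assms e by (intro sum_mono mult_left_mono) (auto simp: distr_def)
  also have "\<dots> = exp (e * M)" using assms(2) by (simp add: distr_def flip: sum_distrib_right)
  finally have "ln (\<Sum>a<K. p a * exp (e * yh a)) \<le> e * M"
    using mean_exp_pos[OF assms(2)] by (metis ln_exp ln_le_cancel_iff exp_gt_zero)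
  then have "1 / e * ln (\<Sum>a<K. p a * exp (e * yh a)) \<le> M"
    using e by (simp add: field_simps)
  then show ?thesis using False by (simp add: ah_delta_def e_def)
qed

lemma delta_var:
  assumes "D > 0" "distr p" "\<And>a. a < K \<Longrightarrow> yh a \<le> M"
  shows "ah_delta K D p yh \<le> ah_eta K D / 2 * (\<Sum>a<K. p a * (yh a - M)^2)"
proof -
  define e where "e = ah_eta K D"
  have e: "e > 0" using assms eta_pos by (simp add: e_def)
  define V where "V = (\<Sum>a<K. p a * (yh a - M)^2)"
  define X where "X = e * ((\<Sum>a<K. p a * yh a) - M) + e^2 / 2 * V"
  have "(\<Sum>a<K. p a * exp (e * yh a)) \<le> (\<Sum>a<K. p a * (exp (e * M) * (1 + e * (yh a - M) + (e * (yh a - M))^2/2)))"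
  proof (intro sum_mono mult_left_mono)
    fix a assume a: "a \<in> {..<K}"
    have "e * (yh a - M) \<le> 0" using assms(3)[of a] a e by (simp add: mult_nonneg_nonpos)
    then have "exp (e * (yh a - M)) \<le> 1 + e * (yh a - M) + (e * (yh a - M))^2/2" by (rule exp_quad_bound)
    then have "exp (e * M) * exp (e * (yh a - M)) \<le> exp (e * M) * (1 + e * (yh a - M) + (e * (yh a - M))^2/2)"
      by simp
    moreover have "exp (e * M) * exp (e * (yh a - M)) = exp (e * yh a)" by (simp flip: exp_add add: algebra_simps)
    ultimately show "exp (e * yh a) \<le> exp (e * M) * (1 + e * (yh a - M) + (e * (yh a - M))^2/2)" by simp
    show "0 \<le> p a" using assms(2) a by (simp add: distr_def)
  qed
  also have "\<dots> = (\<Sum>a<K. exp (e * M) * p a + exp (e * M) * e * (p a * yh a) - exp (e * M) * e * M * p a + exp (e * M) * e^2/2 * (p a * (yh a - M)^2))"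
    by (intro sum.cong refl) (simp add: power2_eq_square field_simps)
  also have "\<dots> = exp (e * M) * (\<Sum>a<K. p a) + exp (e * M) * e * (\<Sum>a<K. p a * yh a) - exp (e * M) * e * M * (\<Sum>a<K. p a) + exp (e * M) * e^2/2 * V"
    by (simp add: V_def sum.distrib sum_subtractf sum_distrib_left)
  also have "\<dots> = exp (e * M) * ((\<Sum>a<K. p a) + e * ((\<Sum>a<K. p a * yh a) - M * (\<Sum>a<K. p a)) + e^2/2 * V)"
    by (simp add: algebra_simps)
  also have "\<dots> = exp (e * M) * (1 + X)" using assms(2) by (simp add: distr_def X_def)
  finally have le: "(\<Sum>a<K. p a * exp (e * yh a)) \<le> exp (e * M) * (1 + X)" .
  have pos: "(\<Sum>a<K. p a * exp (e * yh a)) > 0" by (rule mean_exp_pos[OF assms(2)])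
  with le have X1: "1 + X > 0" by (smt (verit) exp_gt_zero mult_nonneg_nonpos)
  have "ln (\<Sum>a<K. p a * exp (e * yh a)) \<le> ln (exp (e * M) * (1 + X))"
    using le pos by simp
  also have "\<dots> = e * M + ln (1 + X)" using X1 by (simp add: ln_mult)
  also have "\<dots> \<le> e * M + X" using X1 ln_add_one_self_le_self2[of X] by (smt (verit) ln_le_minus_one)
  finally have "ln (\<Sum>a<K. p a * exp (e * yh a)) \<le> e * M + X" .
  then have "1 / e * ln (\<Sum>a<K. p a * exp (e * yh a)) \<le> 1 / e * (e * M + X)"
    using e by (intro mult_left_mono) auto
  also have "1 / e * (e * M + X) = (\<Sum>a<K. p a * yh a) + e / 2 * V"
    using e by (simp add: X_def field_simps power2_eq_square)
  finally have H: "1 / e * ln (\<Sum>a<K. p a * exp (e * yh a)) \<le> (\<Sum>a<K. p a * yh a) + e / 2 * V" .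
  have "ah_delta K D p yh = 1 / e * ln (\<Sum>a<K. p a * exp (e * yh a)) - (\<Sum>a<K. p a * yh a)"
    using assms(1) by (simp add: ah_delta_def e_def)
  with H have "ah_delta K D p yh \<le> e / 2 * V" by linarith
  then show ?thesis by (simp add: e_def V_def)
qed

end



context bandit begin

definition Phi :: "(nat \<Rightarrow> real) \<Rightarrow> real \<Rightarrow> real" where
  "Phi L D = (if D = 0 then Max (L ` {..<K})
     else 1 / ah_eta K D * ln ((\<Sum>a<K. exp (ah_eta K D * L a)) / real K))"

lemma Max_ge': "a < K \<Longrightarrow> f a \<le> Max (f ` {..<K})"
  by (intro Max_ge) auto

lemma Max_ex: "\<exists>a<K. f a = Max (f ` {..<K})"
proof -
  have "Max (f ` {..<K}) \<in> f ` {..<K}" using nonempty by (intro Max_in) auto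
  then show ?thesis by auto
qed

lemma sum_exp_pos: "(\<Sum>a<K. exp (f a :: real)) > 0"
  using nonempty by (intro sum_pos) auto

lemma phi_zero: "Phi (\<lambda>_. 0) 0 = 0"
proof -
  have "(\<lambda>_. 0::real) ` {..<K} = {0}" using nonempty by auto
  then show ?thesis by (simp add: Phi_def)
qed

lemma phi_step:
  assumes "D \<ge> 0"
  shows "Phi (\<lambda>a. L a + yh a) D - Phi L D \<le> (\<Sum>a<K. ah_prob K L D a * yh a) + ah_delta K D (ah_prob K L D) yh"
proof (cases "D = 0")
  case True
  have "Max ((\<lambda>a. L a + yh a) ` {..<K}) \<le> Max (L ` {..<K}) + Max (yh ` {..<K})"
    using nonempty by (subst Max_le_iff) (auto intro!: add_mono Max_ge')
  then show ?thesis using True by (simp add: Phi_def ah_delta_def)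
next
  case False
  define e where "e = ah_eta K D"
  have e: "e > 0" using False assms eta_pos by (simp add: e_def)
  define Z where "Z = (\<Sum>a<K. exp (e * L a))"
  define Z' where "Z' = (\<Sum>a<K. exp (e * (L a + yh a)))"
  have Z: "Z > 0" unfolding Z_def by (rule sum_exp_pos)
  have Z': "Z' > 0" unfolding Z'_def by (rule sum_exp_pos)
  have "(\<Sum>a<K. ah_prob K L D a * exp (e * yh a)) = (\<Sum>a<K. exp (e * (L a + yh a)) / Z)"
    using False by (intro sum.cong refl) (simp add: ah_prob_def e_def Z_def distrib_left exp_add)
  also have "\<dots> = Z' / Z" by (simp add: Z'_def sum_divide_distrib)
  finally have S: "(\<Sum>a<K. ah_prob K L D a * exp (e * yh a)) = Z' / Z" .
  have "Phi (\<lambda>a. L a + yh a) D - Phi L D = 1 / e * (ln (Z' / K) - ln (Z / K))"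
    using False by (simp add: Phi_def e_def Z_def Z'_def right_diff_distrib)
  also have "ln (Z' / K) - ln (Z / K) = ln (Z' / Z)"
    using Z Z' Kpos by (simp add: ln_div)
  finally have "Phi (\<lambda>a. L a + yh a) D - Phi L D = 1 / e * ln (Z' / Z)" .
  moreover have "(\<Sum>a<K. ah_prob K L D a * yh a) + ah_delta K D (ah_prob K L D) yh = 1 / e * ln (Z' / Z)"
    using False S by (simp add: ah_delta_def e_def)
  ultimately show ?thesis by simp
qed

lemma phi_lower:
  assumes "D \<ge> 0"
  shows "Max (L ` {..<K}) - D \<le> Phi L D"
proof (cases "D = 0")
  case True
  then show ?thesis by (simp add: Phi_def)
next
  case False
  define e where "e = ah_eta K D"
  have D: "D > 0" using False assms by simp
  have e: "e > 0" using D eta_pos by (simp add: e_def)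
  obtain a0 where a0: "a0 < K" "L a0 = Max (L ` {..<K})" using Max_ex by blast
  have "exp (e * L a0) \<le> (\<Sum>a<K. exp (e * L a))"
    using a0 by (intro member_le_sum) auto
  then have "exp (e * L a0) / K \<le> (\<Sum>a<K. exp (e * L a)) / K"
    using Kpos by (simp add: divide_right_mono)
  then have "ln (exp (e * L a0) / K) \<le> ln ((\<Sum>a<K. exp (e * L a)) / K)"
    using Kpos sum_exp_pos[of "\<lambda>a. e * L a"] by (subst ln_le_cancel_iff) auto
  moreover have "ln (exp (e * L a0) / K) = e * L a0 - ln K" using Kpos by (simp add: ln_div)
  ultimately have "e * L a0 - ln K \<le> ln ((\<Sum>a<K. exp (e * L a)) / K)" by simp
  then have "1 / e * (e * L a0 - ln K) \<le> 1 / e * ln ((\<Sum>a<K. exp (e * L a)) / K)"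
    using e by (intro mult_left_mono) auto
  moreover have "1 / e * (e * L a0 - ln K) = L a0 - D"
    using e D lnK_pos by (simp add: e_def ah_eta_def field_simps)
  ultimately show ?thesis using a0 False by (simp add: Phi_def e_def)
qed

lemma phi_mono:
  assumes "0 \<le> D" "D \<le> D'"
  shows "Phi L D' \<le> Phi L D"
proof (cases "D' = 0")
  case True
  then show ?thesis using assms by simp
next
  case False
  define e' where "e' = ah_eta K D'"
  have D': "D' > 0" using False assms by simp
  have e': "e' > 0" using D' eta_pos by (simp add: e'_def)
  show ?thesis
  proof (cases "D = 0")
    case True
    have "(\<Sum>a<K. exp (e' * L a)) / K \<le> (\<Sum>a<K. exp (e' * Max (L ` {..<K}))) / K"
      using Kpos e' by (intro divide_right_mono sum_mono) (auto intro!: Max_ge')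
    also have "\<dots> = exp (e' * Max (L ` {..<K}))" using Kpos by simp
    finally have "ln ((\<Sum>a<K. exp (e' * L a)) / K) \<le> e' * Max (L ` {..<K})"
      using sum_exp_pos[of "\<lambda>a. e' * L a"] Kpos by (metis divide_pos_pos ln_exp ln_le_cancel_iff exp_gt_zero)
    then have "1 / e' * ln ((\<Sum>a<K. exp (e' * L a)) / K) \<le> 1 / e' * (e' * Max (L ` {..<K}))"
      using e' by (intro mult_left_mono) auto
    then show ?thesis using True False e' by (simp add: Phi_def e'_def)
  next
    case Dne: False
    define e where "e = ah_eta K D"
    have D: "D > 0" using Dne assms by simp
    have e: "e > 0" using D eta_pos by (simp add: e_def)
    define r where "r = D / D'"
    have r0: "0 < r" and r1: "r \<le> 1" using D D' assms by (auto simp: r_def)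
    have e'r: "e' = r * e" using D D' by (simp add: e'_def e_def r_def ah_eta_def)
    define c where "c = (\<Sum>a<K. exp (e * L a)) / K"
    have c: "c > 0" unfolding c_def using sum_exp_pos[of "\<lambda>a. e * L a"] Kpos by simp
    define lam where "lam = ln c"
    have "(\<Sum>a<K. exp (e' * L a) * exp ((1 - r) * lam)) \<le> (\<Sum>a<K. r * exp (e * L a) + (1 - r) * exp lam)"
    proof (intro sum_mono)
      fix a
      have "exp (e' * L a) * exp ((1 - r) * lam) = exp (r * (e * L a) + (1 - r) * lam)"
        by (simp add: e'r flip: exp_add)
      also have "\<dots> \<le> r * exp (e * L a) + (1 - r) * exp lam" using r0 r1 by (intro exp_mix) auto
      finally show "exp (e' * L a) * exp ((1 - r) * lam) \<le> r * exp (e * L a) + (1 - r) * exp lam" .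
    qed
    also have "\<dots> = r * (c * K) + (1 - r) * c * K"
      using Kpos c by (simp add: sum.distrib c_def lam_def flip: sum_distrib_left)
    also have "\<dots> = c * K" by (simp add: algebra_simps)
    finally have "(\<Sum>a<K. exp (e' * L a) * exp ((1 - r) * lam)) \<le> c * K" .
    then have "(\<Sum>a<K. exp (e' * L a)) * exp ((1 - r) * lam) \<le> c * K"
      by (simp add: sum_distrib_right)
    then have "(\<Sum>a<K. exp (e' * L a)) / K * exp ((1 - r) * lam) \<le> c"
      using Kpos by (simp add: field_simps)
    then have "(\<Sum>a<K. exp (e' * L a)) / K \<le> c / exp ((1 - r) * lam)"
      by (simp add: field_simps)
    also have "c / exp ((1 - r) * lam) = exp (r * lam)"
      using c by (simp add: lam_def left_diff_distrib exp_diff)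
    finally have "ln ((\<Sum>a<K. exp (e' * L a)) / K) \<le> r * lam"
      using sum_exp_pos[of "\<lambda>a. e' * L a"] Kpos by (metis divide_pos_pos ln_exp ln_le_cancel_iff exp_gt_zero)
    then have "1 / e' * ln ((\<Sum>a<K. exp (e' * L a)) / K) \<le> 1 / e' * (r * lam)"
      using e' by (intro mult_left_mono) auto
    also have "1 / e' * (r * lam) = 1 / e * lam" using e r0 by (simp add: e'r)
    finally show ?thesis using Dne False by (simp add: Phi_def e_def e'_def lam_def c_def)
  qed
qed

end



context bandit begin

definition "LL A t = fst (ah_state K M y A t)"
definition "DD A t = snd (ah_state K M y A t)"
definition "yh A t a = (if a = A t then (y t a - M) / ah_p K M y A t a + M else M)"
definition "dl A t = ah_delta K (DD A t) (ah_p K M y A t) (yh A t)"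
definition "gv A t = (\<Sum>a<K. ah_p K M y A t a * (yh A t a - M)^2)"
definition "hg A t = (\<Sum>a<K. ah_p K M y A t a * yh A t a)"

lemma p_eq: "ah_p K M y A t = ah_prob K (LL A t) (DD A t)"
  by (simp add: ah_p_def LL_def DD_def)

lemma LL0: "LL A 0 = (\<lambda>_. 0)" by (simp add: LL_def)
lemma DD0: "DD A 0 = 0" by (simp add: DD_def)

lemma yh_fun: "yh A t = (\<lambda>a. if a = A t then (y t a - M) / ah_prob K (fst (ah_state K M y A t)) (snd (ah_state K M y A t)) a + M else M)"
  by (simp add: fun_eq_iff yh_def ah_p_def)

lemma LL_Suc: "LL A (Suc t) = (\<lambda>a. LL A t a + yh A t a)"
  by (simp add: yh_fun Let_def LL_def)

lemma DD_Suc: "DD A (Suc t) = DD A t + dl A t"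
  by (simp add: dl_def yh_fun Let_def DD_def ah_p_def)

lemma state_cong: "(\<And>s. s < t \<Longrightarrow> A s = B s) \<Longrightarrow> ah_state K M y A t = ah_state K M y B t"
  by (induction t) (auto simp: Let_def)

lemma p_cong: "(\<And>s. s < t \<Longrightarrow> A s = B s) \<Longrightarrow> ah_p K M y A t = ah_p K M y B t"
  unfolding ah_p_def using state_cong by metis

lemma p_distr: "distr (ah_p K M y A t)"
  by (simp add: p_eq distr_prob)

lemma p_nonneg: "0 \<le> ah_p K M y A t a"
  by (simp add: p_eq prob_nonneg)

lemma yh_le: "a < K \<Longrightarrow> yh A t a \<le> M"
  using yb[of a t] p_nonneg[of A t a] by (auto simp: yh_def intro: divide_nonpos_nonneg)

lemma hg_eq: "hg A t = M + (if A t < K \<and> ah_p K M y A t (A t) \<noteq> 0 then y t (A t) - M else 0)"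
proof -
  have "hg A t = (\<Sum>a<K. M * ah_p K M y A t a + (if a = A t then ah_p K M y A t a * ((y t a - M) / ah_p K M y A t a) else 0))"
    unfolding hg_def yh_def by (intro sum.cong refl) (auto simp: algebra_simps)
  also have "\<dots> = M * (\<Sum>a<K. ah_p K M y A t a) + (if A t < K then ah_p K M y A t (A t) * ((y t (A t) - M) / ah_p K M y A t (A t)) else 0)"
    by (simp add: sum.distrib sum_distrib_left sum.delta')
  also have "\<dots> = M + (if A t < K \<and> ah_p K M y A t (A t) \<noteq> 0 then y t (A t) - M else 0)"
    using p_distr[of A t] by (auto simp: distr_def)
  finally show ?thesis .
qed

lemma hg_ge: "m \<le> hg A t"
  using hg_eq[of A t] yb[of "A t" t] mM by auto

lemma DD_nonneg: "0 \<le> DD A t"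
proof (induction t)
  case 0 then show ?case by (simp add: DD0)
next
  case (Suc t)
  have "0 \<le> dl A t" unfolding dl_def by (rule delta_nonneg[OF Suc p_distr])
  with Suc show ?case by (simp add: DD_Suc)
qed

lemma dl_nonneg: "0 \<le> dl A t"
  unfolding dl_def by (rule delta_nonneg[OF DD_nonneg p_distr])

lemma dl_le: "dl A t \<le> M - m"
proof -
  have "dl A t \<le> M - hg A t"
    unfolding dl_def hg_def by (rule delta_upper[OF DD_nonneg p_distr yh_le])
  with hg_ge[of A t] show ?thesis by linarith
qed

lemma gv_nonneg: "0 \<le> gv A t"
  unfolding gv_def by (intro sum_nonneg mult_nonneg_nonneg p_nonneg) auto

lemma DD_dl: "2 * (DD A t * dl A t) \<le> ln K * gv A t"
proof (cases "DD A t = 0")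
  case True then show ?thesis using gv_nonneg[of A t] lnK_pos by simp
next
  case False
  then have D: "DD A t > 0" using DD_nonneg[of A t] by simp
  have "dl A t \<le> ah_eta K (DD A t) / 2 * gv A t"
    unfolding dl_def gv_def by (rule delta_var[OF D p_distr yh_le])
  then have "2 * (DD A t * dl A t) \<le> 2 * (DD A t * (ah_eta K (DD A t) / 2 * gv A t))"
    using D by simp
  also have "\<dots> = ln K * gv A t" using D by (simp add: ah_eta_def)
  finally show ?thesis .
qed

lemma DD_sum: "DD A T = (\<Sum>t<T. dl A t)"
  by (induction T) (simp_all add: DD0 DD_Suc)

lemma LL_sum: "LL A T a = (\<Sum>t<T. yh A t a)"
  by (induction T) (simp_all add: LL0 LL_Suc)

lemma path_phi: "Phi (LL A T) (DD A T) \<le> (\<Sum>t<T. hg A t + dl A t)"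
proof (induction T)
  case 0 then show ?case by (simp add: LL0 DD0 phi_zero)
next
  case (Suc t)
  have "Phi (LL A (Suc t)) (DD A t) - Phi (LL A t) (DD A t) \<le> hg A t + dl A t"
    unfolding LL_Suc hg_def dl_def p_eq by (rule phi_step[OF DD_nonneg])
  moreover have "Phi (LL A (Suc t)) (DD A (Suc t)) \<le> Phi (LL A (Suc t)) (DD A t)"
    by (rule phi_mono[OF DD_nonneg]) (simp add: DD_Suc dl_nonneg)
  ultimately show ?case using Suc by simp
qed

lemma path_regret: "Max (LL A T ` {..<K}) - (\<Sum>t<T. hg A t) \<le> 2 * DD A T"
proof -
  have "Max (LL A T ` {..<K}) - DD A T \<le> Phi (LL A T) (DD A T)" by (rule phi_lower[OF DD_nonneg])
  also note path_phi
  also have "(\<Sum>t<T. hg A t + dl A t) = (\<Sum>t<T. hg A t) + DD A T"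
    by (simp add: sum.distrib DD_sum)
  finally show ?thesis by simp
qed

lemma path_sq: "(DD A T)^2 \<le> ln K * (\<Sum>t<T. gv A t) + (M - m) * DD A T"
proof (induction T)
  case 0 then show ?case by (simp add: DD0)
next
  case (Suc t)
  have "(DD A (Suc t))^2 = (DD A t)^2 + 2 * (DD A t * dl A t) + dl A t * dl A t"
    by (simp add: DD_Suc power2_eq_square algebra_simps)
  also have "dl A t * dl A t \<le> (M - m) * dl A t"
    using dl_le[of A t] dl_nonneg[of A t] by (intro mult_right_mono) auto
  finally show ?case using Suc DD_dl[of A t] by (simp add: DD_Suc algebra_simps)
qed

lemma path_DD: "DD A T \<le> (M - m) + sqrt (ln K * (\<Sum>t<T. gv A t))"
proof (rule ccontr)
  define a where "a = ln K * (\<Sum>t<T. gv A t)"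
  define b where "b = M - m"
  have a: "a \<ge> 0" unfolding a_def using lnK_pos gv_nonneg by (intro mult_nonneg_nonneg sum_nonneg) auto
  have b: "b \<ge> 0" using mM by (simp add: b_def)
  assume "\<not> ?thesis"
  then have lt: "b + sqrt a < DD A T" by (simp add: a_def b_def)
  have "(DD A T)^2 \<le> a + b * DD A T" using path_sq by (simp add: a_def b_def)
  moreover have "a + b * DD A T < (DD A T)^2"
  proof -
    have "sqrt a * sqrt a \<le> sqrt a * (DD A T - b)" using lt a by (intro mult_left_mono) auto
    then have "a \<le> sqrt a * (DD A T - b)" using a by simp
    also have "\<dots> < DD A T * (DD A T - b)"
    proof (rule mult_strict_right_mono)
      show "sqrt a < DD A T" using lt b by linarith
      show "0 < DD A T - b" using lt real_sqrt_ge_zero[OF a] by linarith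
    qed
    finally show ?thesis by (simp add: power2_eq_square algebra_simps)
  qed
  ultimately show False by simp
qed

end



context bandit begin

abbreviation "PP T \<equiv> PiE {..<T} (\<lambda>_::nat. {..<K})"

definition "W T A = (\<Prod>t<T. ah_p K M y A t (A t))"
definition "E T f = (\<Sum>A\<in>PP T. W T A * f A)"
definition "dep T f \<longleftrightarrow> (\<forall>A B. (\<forall>s<T. A s = B s) \<longrightarrow> f A = (f B :: real))"

lemma W_nonneg: "0 \<le> W T A"
  unfolding W_def by (intro prod_nonneg p_nonneg)

lemma W_Suc: "W (Suc T) A = W T A * ah_p K M y A T (A T)"
  by (simp add: W_def)

lemma W_upd: "W T (A(T := a)) = W T A"
  unfolding W_def
proof (intro prod.cong refl)
  fix t assume "t \<in> {..<T}"
  then have "t < T" by simp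
  moreover have "ah_p K M y (A(T := a)) t = ah_p K M y A t" using \<open>t < T\<close> by (intro p_cong) auto
  ultimately show "ah_p K M y (A(T := a)) t ((A(T := a)) t) = ah_p K M y A t (A t)" by simp
qed

lemma p_upd: "ah_p K M y (A(T := a)) T = ah_p K M y A T"
  by (intro p_cong) auto

lemma PP_Suc: "PP (Suc T) = (\<lambda>(a, g). g(T := a)) ` ({..<K} \<times> PP T)"
  unfolding lessThan_Suc by (rule PiE_insert_eq)

lemma PP_inj: "inj_on (\<lambda>(a, g). g(T := a)) ({..<K} \<times> PP T)"
proof (rule inj_onI)
  fix u v assume u: "u \<in> {..<K} \<times> PP T" and v: "v \<in> {..<K} \<times> PP T"
    and eq0: "(\<lambda>(a, g). g(T := a)) u = (\<lambda>(a, g). g(T := a)) v"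
  obtain a g where ag: "u = (a, g)" by (cases u)
  obtain a' g' where ag': "v = (a', g')" by (cases v)
  have g: "g \<in> PP T" using u ag by simp
  have g': "g' \<in> PP T" using v ag' by simp
  have eq: "g(T := a) = g'(T := a')" using eq0 ag ag' by simp
  have "a = a'" using fun_cong[OF eq, of T] by simp
  moreover have "g = g'"
  proof (rule ext)
    fix x show "g x = g' x"
    proof (cases "x = T")
      case True
      then have x: "x \<notin> {..<T}" by simp
      have "g x = undefined" by (rule PiE_arb[OF g x])
      moreover have "g' x = undefined" by (rule PiE_arb[OF g' x])
      ultimately show ?thesis by simp
    next
      case False then show ?thesis using fun_cong[OF eq, of x] by simp
    qed
  qed
  ultimately show "u = v" using ag ag' by simp
qed

lemma E_Suc: "E (Suc T) f = E T (\<lambda>A. \<Sum>a<K. ah_p K M y A T a * f (A(T := a)))"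
proof -
  have "E (Suc T) f = (\<Sum>x\<in>{..<K} \<times> PP T. (\<lambda>B. W (Suc T) B * f B) ((\<lambda>(a, g). g(T := a)) x))"
    unfolding E_def PP_Suc by (subst sum.reindex[OF PP_inj]) (simp only: comp_def)
  also have "\<dots> = (\<Sum>a<K. \<Sum>g\<in>PP T. W (Suc T) (g(T := a)) * f (g(T := a)))"
    by (simp add: sum.cartesian_product split_def)
  also have "\<dots> = (\<Sum>g\<in>PP T. \<Sum>a<K. W (Suc T) (g(T := a)) * f (g(T := a)))"
    by (rule sum.swap)
  also have "\<dots> = (\<Sum>g\<in>PP T. W T g * (\<Sum>a<K. ah_p K M y g T a * f (g(T := a))))"
    by (intro sum.cong refl) (simp add: W_Suc W_upd p_upd sum_distrib_left algebra_simps)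
  finally show ?thesis by (simp add: E_def)
qed

lemma E_0: "E 0 f = f (\<lambda>_. undefined)"
  by (simp add: E_def W_def PiE_empty_domain)

lemma E_add: "E T (\<lambda>A. f A + g A) = E T f + E T g"
  by (simp add: E_def distrib_left sum.distrib)

lemma E_diff: "E T (\<lambda>A. f A - g A) = E T f - E T g"
  by (simp add: E_def right_diff_distrib sum_subtractf)

lemma E_cmult: "E T (\<lambda>A. c * f A) = c * E T f"
  by (simp add: E_def sum_distrib_left algebra_simps)

lemma E_sum: "E T (\<lambda>A. \<Sum>i\<in>I. f i A) = (\<Sum>i\<in>I. E T (f i))"
  unfolding E_def by (simp add: sum_distrib_left) (rule sum.swap)

lemma E_one: "E T (\<lambda>_. 1) = 1"
proof (induction T)
  case 0 then show ?case by (simp add: E_0)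
next
  case (Suc T)
  have "E (Suc T) (\<lambda>_. 1) = E T (\<lambda>A. \<Sum>a<K. ah_p K M y A T a)" by (simp add: E_Suc)
  also have "\<dots> = E T (\<lambda>_. 1)" using p_distr by (simp add: distr_def)
  finally show ?case using Suc by simp
qed

lemma E_const: "E T (\<lambda>_. c) = c"
  using E_cmult[of T c "\<lambda>_. 1"] by (simp add: E_one)

lemma W_zero:
  assumes "W T A \<noteq> 0" "t < T" shows "ah_p K M y A t (A t) \<noteq> 0"
  using assms unfolding W_def by (auto simp: prod_zero_iff)

lemma E_mono:
  assumes "\<And>A. A \<in> PP T \<Longrightarrow> W T A \<noteq> 0 \<Longrightarrow> f A \<le> g A"
  shows "E T f \<le> E T g"
  unfolding E_def
proof (intro sum_mono)
  fix A assume A: "A \<in> PP T"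
  show "W T A * f A \<le> W T A * g A"
    using assms[OF A] W_nonneg[of T A] by (cases "W T A = 0") (auto intro: mult_left_mono)
qed

lemma E_cong:
  assumes "\<And>A. A \<in> PP T \<Longrightarrow> W T A \<noteq> 0 \<Longrightarrow> f A = g A"
  shows "E T f = E T g"
proof -
  have "E T f \<le> E T g" by (rule E_mono) (simp add: assms)
  moreover have "E T g \<le> E T f" by (rule E_mono) (simp add: assms)
  ultimately show ?thesis by simp
qed

lemma E_dep:
  assumes "dep T f" shows "E (T + n) f = E T f"
proof (induction n)
  case 0 then show ?case by simp
next
  case (Suc n)
  have "E (T + Suc n) f = E (T + n) (\<lambda>A. \<Sum>a<K. ah_p K M y A (T + n) a * f (A(T + n := a)))"
    by (simp add: E_Suc)
  also have "\<dots> = E (T + n) (\<lambda>A. (\<Sum>a<K. ah_p K M y A (T + n) a) * f A)"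
  proof -
    have "f (A(T + n := a)) = f A" for A a
    proof -
      have "\<forall>s<T. (A(T + n := a)) s = A s" by auto
      then show ?thesis using assms unfolding dep_def by blast
    qed
    then show ?thesis by (simp add: sum_distrib_right)
  qed
  also have "\<dots> = E (T + n) f" using p_distr by (simp add: distr_def)
  finally show ?case using Suc by simp
qed

lemma E_dep': "dep (Suc t) f \<Longrightarrow> t < T \<Longrightarrow> E T f = E t (\<lambda>A. \<Sum>a<K. ah_p K M y A t a * f (A(t := a)))"
  using E_dep[of "Suc t" f "T - Suc t"] by (simp add: E_Suc)

end



context bandit begin

lemma yh_upd: "yh (A(t := b)) t a = (if a = b then (y t a - M) / ah_p K M y A t a + M else M)"
  by (simp add: yh_def p_upd)

lemma dep_yh_gen:
  assumes "\<forall>s<Suc t. A s = B s"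
  shows "yh A t = yh B t" "ah_p K M y A t = ah_p K M y B t"
proof -
  show p: "ah_p K M y A t = ah_p K M y B t" using assms by (intro p_cong) auto
  have "A t = B t" using assms by auto
  then show "yh A t = yh B t" using p by (simp add: yh_def fun_eq_iff)
qed

lemma dep_yh: "dep (Suc t) (\<lambda>A. yh A t a)"
  unfolding dep_def using dep_yh_gen by metis

lemma dep_gv: "dep (Suc t) (\<lambda>A. gv A t)"
  unfolding dep_def gv_def
proof (intro allI impI)
  fix A B :: "nat \<Rightarrow> nat" assume H: "\<forall>s<Suc t. A s = B s"
  show "(\<Sum>a<K. ah_p K M y A t a * (yh A t a - M)\<^sup>2) = (\<Sum>a<K. ah_p K M y B t a * (yh B t a - M)\<^sup>2)"
    using dep_yh_gen[OF H] by simp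
qed

lemma E_yh:
  assumes "t < T" "a < K" shows "y t a \<le> E T (\<lambda>A. yh A t a)"
proof -
  have "E T (\<lambda>A. yh A t a) = E t (\<lambda>A. \<Sum>b<K. ah_p K M y A t b * yh (A(t := b)) t a)"
    by (rule E_dep'[OF dep_yh assms(1)])
  also have "E t (\<lambda>_. y t a) \<le> \<dots>"
  proof (rule E_mono)
    fix A
    let ?p = "ah_p K M y A t"
    have "(\<Sum>b<K. ?p b * yh (A(t := b)) t a) = (\<Sum>b<K. M * ?p b + (if b = a then ?p a * ((y t a - M) / ?p a) else 0))"
      by (intro sum.cong refl) (auto simp: yh_upd algebra_simps)
    also have "\<dots> = M + ?p a * ((y t a - M) / ?p a)"
      using assms(2) p_distr[of A t] by (simp add: sum.distrib distr_def flip: sum_distrib_left)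
    finally show "y t a \<le> (\<Sum>b<K. ?p b * yh (A(t := b)) t a)"
      using yb[OF assms(2), of t] by (cases "?p a = 0") auto
  qed
  finally show ?thesis by (simp add: E_const)
qed

lemma E_gv:
  assumes "t < T" shows "E T (\<lambda>A. gv A t) \<le> K * (M - m)^2"
proof -
  have "E T (\<lambda>A. gv A t) = E t (\<lambda>A. \<Sum>b<K. ah_p K M y A t b * gv (A(t := b)) t)"
    by (rule E_dep'[OF dep_gv assms(1)])
  also have "\<dots> \<le> E t (\<lambda>_. K * (M - m)^2)"
  proof (rule E_mono)
    fix A
    let ?p = "ah_p K M y A t"
    have "(\<Sum>b<K. ?p b * gv (A(t := b)) t) = (\<Sum>b<K. ?p b * ?p b * ((y t b - M) / ?p b)^2)"
    proof (intro sum.cong refl)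
      fix b assume b: "b \<in> {..<K}"
      have "gv (A(t := b)) t = (\<Sum>a<K. if a = b then ?p b * ((y t b - M) / ?p b)^2 else 0)"
        unfolding gv_def p_upd by (intro sum.cong refl) (auto simp: yh_upd)
      also have "\<dots> = ?p b * ((y t b - M) / ?p b)^2" using b by simp
      finally show "?p b * gv (A(t := b)) t = ?p b * ?p b * ((y t b - M) / ?p b)^2" by simp
    qed
    also have "\<dots> \<le> (\<Sum>b<K. (M - m)^2)"
    proof (intro sum_mono)
      fix b assume b: "b \<in> {..<K}"
      show "?p b * ?p b * ((y t b - M) / ?p b)^2 \<le> (M - m)^2"
      proof (cases "?p b = 0")
        case True then show ?thesis by simp
      next
        case False
        have "(y t b - M)^2 \<le> (M - m)^2"
          using yb[of b t] b by (intro power2_le_iff_abs_le[THEN iffD2]) auto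
        moreover have "?p b * ?p b * ((y t b - M) / ?p b)^2 = (y t b - M)^2"
          using False by (simp add: power_divide power2_eq_square)
        ultimately show ?thesis by simp
      qed
    qed
    finally show "(\<Sum>b<K. ?p b * gv (A(t := b)) t) \<le> K * (M - m)^2" by simp
  qed
  finally show ?thesis by (simp add: E_const)
qed

end



context bandit begin

lemma gain_eq: "ah_expected_gain K M y T = E T (\<lambda>A. \<Sum>t<T. hg A t)"
proof -
  have "ah_expected_gain K M y T = E T (\<lambda>A. \<Sum>t<T. y t (A t))"
    by (simp add: ah_expected_gain_def E_def W_def)
  also have "\<dots> = E T (\<lambda>A. \<Sum>t<T. hg A t)"
  proof (rule E_cong)
    fix A assume A: "A \<in> PP T" and W: "W T A \<noteq> 0"
    show "(\<Sum>t<T. y t (A t)) = (\<Sum>t<T. hg A t)"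
    proof (intro sum.cong refl)
      fix t assume t: "t \<in> {..<T}"
      have "A t < K" using PiE_mem[OF A, of t] t by simp
      moreover have "ah_p K M y A t (A t) \<noteq> 0" using W_zero[OF W] t by simp
      ultimately show "y t (A t) = hg A t" by (simp add: hg_eq)
    qed
  qed
  finally show ?thesis .
qed

lemma max_le: "Max ((\<lambda>a. \<Sum>t<T. y t a) ` {..<K}) \<le> E T (\<lambda>A. Max (LL A T ` {..<K}))"
proof (subst Max_le_iff, simp, simp add: nonempty, intro ballI)
  fix z assume "z \<in> (\<lambda>a. \<Sum>t<T. y t a) ` {..<K}"
  then obtain a where a: "a < K" and z: "z = (\<Sum>t<T. y t a)" by auto
  have "(\<Sum>t<T. y t a) \<le> (\<Sum>t<T. E T (\<lambda>A. yh A t a))"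
    using a by (intro sum_mono E_yh) auto
  also have "\<dots> = E T (\<lambda>A. LL A T a)" by (simp add: E_sum LL_sum)
  also have "\<dots> \<le> E T (\<lambda>A. Max (LL A T ` {..<K}))"
    using a by (intro E_mono Max_ge')
  finally show "z \<le> E T (\<lambda>A. Max (LL A T ` {..<K}))" using z by simp
qed

lemma EV: "E T (\<lambda>A. \<Sum>t<T. gv A t) \<le> T * (K * (M - m)^2)"
proof -
  have "E T (\<lambda>A. \<Sum>t<T. gv A t) = (\<Sum>t<T. E T (\<lambda>A. gv A t))" by (rule E_sum)
  also have "\<dots> \<le> (\<Sum>t<T. K * (M - m)^2)" by (intro sum_mono E_gv) auto
  finally show ?thesis by simp
qed

lemma sqrt_amgm:
  fixes x c :: real assumes "0 \<le> x" "0 < c"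
  shows "sqrt x \<le> x / (2 * c) + c / 2"
proof -
  have "0 \<le> (sqrt x - c)^2" by simp
  then have "2 * c * sqrt x \<le> x + c^2" using assms by (simp add: power2_eq_square algebra_simps)
  then show ?thesis using assms by (simp add: field_simps power2_eq_square)
qed

lemma Esqrt:
  assumes T: "T \<ge> 1"
  shows "E T (\<lambda>A. sqrt (ln K * (\<Sum>t<T. gv A t))) \<le> sqrt (ln K * (T * (K * (M - m)^2)))"
proof (cases "M = m")
  case True
  have "gv A t = 0" for A t
    unfolding gv_def
  proof (intro sum.neutral ballI)
    fix a assume a: "a \<in> {..<K}"
    have "y t a = M" using yb[of a t] a True by simp
    then have "yh A t a = M" by (auto simp: yh_def)
    then show "ah_p K M y A t a * (yh A t a - M)^2 = 0" by simp
  qed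
  then have "E T (\<lambda>A. sqrt (ln K * (\<Sum>t<T. gv A t))) = 0" by (simp add: E_const)
  moreover have "0 \<le> ln K * (T * (K * (M - m)^2))" using lnK_pos by simp
  ultimately show ?thesis by simp
next
  case False
  define s where "s = sqrt (ln K * (T * (K * (M - m)^2)))"
  have "ln K * (T * (K * (M - m)^2)) > 0"
    using False mM T lnK_pos Kpos by (intro mult_pos_pos) auto
  then have s: "s > 0" unfolding s_def by simp
  have ss: "s * s = ln K * (T * (K * (M - m)^2))"
    unfolding s_def using \<open>ln K * (T * (K * (M - m)^2)) > 0\<close> by simp
  have "E T (\<lambda>A. sqrt (ln K * (\<Sum>t<T. gv A t))) \<le> E T (\<lambda>A. ln K / (2 * s) * (\<Sum>t<T. gv A t) + s / 2)"
  proof (rule E_mono)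
    fix A
    have "0 \<le> ln K * (\<Sum>t<T. gv A t)" using lnK_pos gv_nonneg by (intro mult_nonneg_nonneg sum_nonneg) auto
    from sqrt_amgm[OF this s] show "sqrt (ln K * (\<Sum>t<T. gv A t)) \<le> ln K / (2 * s) * (\<Sum>t<T. gv A t) + s / 2"
      by simp
  qed
  also have "\<dots> = ln K / (2 * s) * E T (\<lambda>A. \<Sum>t<T. gv A t) + s / 2"
    by (simp only: E_add E_cmult E_const)
  also have "\<dots> \<le> ln K / (2 * s) * (T * (K * (M - m)^2)) + s / 2"
    using EV s lnK_pos by (intro add_mono mult_left_mono) auto
  also have "\<dots> = s" using s ss by (simp add: field_simps)
  finally show ?thesis by (simp add: s_def)
qed

lemma regret_bound:
  assumes T: "T \<ge> 1"
  shows "ah_regret K M y T \<le> 2 * (M - m) * sqrt (real K * real T * ln (real K)) + 2 * (M - m)"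
proof -
  have "ah_regret K M y T \<le> E T (\<lambda>A. Max (LL A T ` {..<K})) - E T (\<lambda>A. \<Sum>t<T. hg A t)"
    using max_le by (simp add: ah_regret_def gain_eq)
  also have "\<dots> = E T (\<lambda>A. Max (LL A T ` {..<K}) - (\<Sum>t<T. hg A t))" by (simp add: E_diff)
  also have "\<dots> \<le> E T (\<lambda>A. 2 * (M - m) + 2 * sqrt (ln K * (\<Sum>t<T. gv A t)))"
  proof (rule E_mono)
    fix A
    have "Max (LL A T ` {..<K}) - (\<Sum>t<T. hg A t) \<le> 2 * DD A T" by (rule path_regret)
    also have "\<dots> \<le> 2 * ((M - m) + sqrt (ln K * (\<Sum>t<T. gv A t)))" using path_DD[of A T] by simp
    finally show "Max (LL A T ` {..<K}) - (\<Sum>t<T. hg A t) \<le> 2 * (M - m) + 2 * sqrt (ln K * (\<Sum>t<T. gv A t))"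
      by simp
  qed
  also have "\<dots> = 2 * (M - m) + 2 * E T (\<lambda>A. sqrt (ln K * (\<Sum>t<T. gv A t)))"
    by (simp add: E_add E_cmult E_const)
  also have "\<dots> \<le> 2 * (M - m) + 2 * sqrt (ln K * (T * (K * (M - m)^2)))"
    using Esqrt[OF T] by simp
  also have "sqrt (ln K * (T * (K * (M - m)^2))) = (M - m) * sqrt (real K * real T * ln (real K))"
  proof -
    have "ln K * (T * (K * (M - m)^2)) = (real K * real T * ln (real K)) * (M - m)^2"
      by (simp add: algebra_simps)
    then show ?thesis using mM by (simp add: real_sqrt_mult)
  qed
  finally show ?thesis by (simp add: algebra_simps)
qed

end

theorem theorem8:
  fixes K :: nat and M m :: real and y :: "nat \<Rightarrow> nat \<Rightarrow> real" and T :: nat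
  assumes "K \<ge> 2" and "m \<le> M"
    and "\<And>t a. a < K \<Longrightarrow> m \<le> y t a \<and> y t a \<le> M"
    and "T \<ge> 1"
  shows "ah_regret K M y T \<le> 2 * (M - m) * sqrt (real K * real T * ln (real K)) + 2 * (M - m)"
proof -
  interpret bandit K M m y
    by unfold_locales (use assms in auto)
  show ?thesis using regret_bound[OF assms(4)] .
qed

end
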